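(* Let $0<\varpi<2$ and $0\le\beta_e\le1$. Let $X$ be binary with distribution $(p,1-p)$ and let $Y$ be the ternary output of the binary erasure channel $$p(y\mid x)=\begin{pmatrix}1-\beta_e&0&\beta_e\\ 0&1-\beta_e&\beta_e\end{pmatrix}.$$ Then the message importance loss capacity is $$C(\varpi,\beta_e)=\max_{p\in[0,1]}\big\{L(\varpi,X)-L(\varpi,X\mid Y)\big\}=(1-\beta_e)\big(e^{\varpi/2}-1\big),$$ attained at $p=1/2$.
   Context: For a discrete random variable $X$ with distribution $\{p(x_1),\dots,p(x_n)\}$ the message importance measure (MIM) is $L(\varpi,X)=\sum_i p(x_i)e^{\varpi(1-p(x_i))}$. For a pair $(X,Y)$ with joint law $p(x_i)p(y_j\mid x_i)$, $p(y_j)=\sum_i p(x_i)p(y_j\mid x_i)$ and $p(x_i\mid y_j)=p(x_i)p(y_j\mid x_i)/p(y_j)$, the conditional message importance measure (CMIM) is $L(\varpi,X\mid Y)=\sum_{j:\,p(y_j)>0} p(y_j)\sum_i p(x_i\mid y_j)e^{\varpi(1-p(x_i\mid y_j))}$. For a fixed transition matrix $p(y\mid x)$, the message importance loss capacity (MILC) is $C=\max_{p(x)}\{L(\varpi,X)-L(\varpi,X\mid Y)\}$. *)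

theory Defs
  imports Complex_Main
begin

definition MIM :: "real \<Rightarrow> ('a \<Rightarrow> real) \<Rightarrow> 'a set \<Rightarrow> real" where
  "MIM w px A = (\<Sum>x\<in>A. px x * exp (w * (1 - px x)))"

definition out_prob :: "('a \<Rightarrow> real) \<Rightarrow> ('a \<Rightarrow> 'b \<Rightarrow> real) \<Rightarrow> 'a set \<Rightarrow> 'b \<Rightarrow> real" where
  "out_prob px W A y = (\<Sum>x\<in>A. px x * W x y)"

definition CMIM :: "real \<Rightarrow> ('a \<Rightarrow> real) \<Rightarrow> ('a \<Rightarrow> 'b \<Rightarrow> real) \<Rightarrow> 'a set \<Rightarrow> 'b set \<Rightarrow> real" where
  "CMIM w px W A B =
     (\<Sum>y\<in>{y\<in>B. out_prob px W A y > 0}.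
        out_prob px W A y *
        (\<Sum>x\<in>A. (px x * W x y / out_prob px W A y) *
                  exp (w * (1 - px x * W x y / out_prob px W A y))))"

definition is_dist :: "('a \<Rightarrow> real) \<Rightarrow> 'a set \<Rightarrow> bool" where
  "is_dist px A \<longleftrightarrow> (\<forall>x\<in>A. 0 \<le> px x) \<and> (\<Sum>x\<in>A. px x) = 1"

definition MILC :: "real \<Rightarrow> ('a \<Rightarrow> 'b \<Rightarrow> real) \<Rightarrow> 'a set \<Rightarrow> 'b set \<Rightarrow> real" where
  "MILC w W A B = Sup {MIM w px A - CMIM w px W A B | px. is_dist px A}"

text \<open>Binary erasure channel: inputs {0,1}, outputs {0,1,2} with 2 = erasure.\<close>
definition BEC :: "real \<Rightarrow> nat \<Rightarrow> nat \<Rightarrow> real" where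
  "BEC \<beta> x y = (if y = 2 then \<beta> else if y = x then 1 - \<beta> else 0)"

definition bin_dist :: "real \<Rightarrow> nat \<Rightarrow> real" where
  "bin_dist p x = (if x = 0 then p else 1 - p)"

end

theory Submission imports Defs begin

lemma key:
  fixes w p :: real assumes "0 < w" "w < 2" "0 \<le> p" "p \<le> 1"
  shows "p * exp (w * (1 - p)) + (1 - p) * exp (w * p) \<le> exp (w/2)"
proof -
  define t where "t = p - 1/2"
  define a where "a = exp (w * t)"
  have a0: "a > 0" unfolding a_def by simp
  have e1: "exp (w * (1 - p)) = exp (w/2) / a" unfolding a_def t_def
    by (simp add: exp_diff[symmetric] algebra_simps)
  have e2: "exp (w * p) = exp (w/2) * a" unfolding a_def t_def
    by (simp add: exp_add[symmetric] algebra_simps)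
  have core: "(a - 1) * ((a - 1)/2 - t * (a + 1)) \<le> 0"
  proof (cases "t \<ge> 0")
    case True
    define y where "y = w * t"
    have y0: "y \<ge> 0" using True assms unfolding y_def by simp
    have "1 - y \<le> exp (-y)" using exp_ge_add_one_self[of "-y"] by simp
    hence "exp y * (1 - y) \<le> exp y * exp (-y)" by (simp add: mult_left_mono)
    hence h1: "exp y - 1 \<le> y * exp y" by (simp add: exp_minus field_simps)
    have "y \<le> 2 * t" using True assms unfolding y_def by (simp add: mult_right_mono)
    hence "y * (exp y + 1) \<le> 2 * t * (exp y + 1)" by (intro mult_right_mono) (auto simp: add_pos_pos)
    moreover have "y*exp y \<le> y*(exp y+1)" using y0 by (simp add: distrib_left)
    moreover have "a = exp y" unfolding a_def y_def by simp
    ultimately have "(a - 1)/2 - t * (a + 1) \<le> 0" using h1 by (simp add: field_simps)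
    moreover have "a \<ge> 1" unfolding a_def using y0 y_def by simp
    ultimately show ?thesis by (simp add: mult_nonneg_nonpos)
  next
    case False
    define z where "z = - (w * t)"
    have z0: "z \<ge> 0" using False assms unfolding z_def by (simp add: mult_nonneg_nonpos)
    have h1: "1 - exp (-z) \<le> z" using exp_ge_add_one_self[of "-z"] by simp
    have "z \<le> - 2 * t" using False assms unfolding z_def by (simp add: mult_right_mono)
    hence "z * (1 + exp (-z)) \<le> - 2 * t * (1 + exp (-z))" by (intro mult_right_mono) (auto simp: add_pos_pos)
    moreover have "z \<le> z*(1+exp (-z))" using z0 by (simp add: distrib_left)
    moreover have "a = exp (-z)" unfolding a_def z_def by simp
    ultimately have "(a - 1)/2 - t * (a + 1) \<ge> 0" using h1 by (simp add: field_simps)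
    moreover have "a \<le> 1" unfolding a_def using z0 z_def by simp
    ultimately show ?thesis by (simp add: mult_nonpos_nonneg)
  qed
  have "p / a + (1 - p) * a \<le> 1"
  proof -
    have "(p / a + (1 - p) * a) * a = p + (1-p) * a * a" using a0 by (simp add: field_simps)
    also have "\<dots> \<le> a" using core unfolding t_def by (simp add: field_simps)
    finally show ?thesis using a0 by (smt (verit) mult_le_cancel_right2)
  qed
  hence "exp (w/2) * (p / a + (1 - p) * a) \<le> exp (w/2)" by simp
  thus ?thesis using e1 e2 by (simp add: algebra_simps)
qed

lemma sum3: "(\<Sum>y\<in>{0::nat,1,2}. g y) = g 0 + g 1 + (g 2 :: real)" by simp

lemma chan:
  fixes w \<beta> :: real and px :: "nat \<Rightarrow> real"
  assumes "0 \<le> \<beta>" "\<beta> \<le> 1" "is_dist px {0,1}"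
  shows "MIM w px {0,1} - CMIM w px (BEC \<beta>) {0,1} {0,1,2}
     = (1 - \<beta>) * (px 0 * exp (w * (1 - px 0)) + px 1 * exp (w * (1 - px 1)) - 1)"
proof -
  have p0: "px 0 \<ge> 0" and p1: "px 1 \<ge> 0" and s: "px 0 + px 1 = 1"
    using assms(3) unfolding is_dist_def by auto
  let ?f = "px 0 * exp (w * (1 - px 0)) + px 1 * exp (w * (1 - px 1))"
  have o0: "out_prob px (BEC \<beta>) {0,1} 0 = px 0 * (1 - \<beta>)"
    by (simp add: out_prob_def BEC_def)
  have o1: "out_prob px (BEC \<beta>) {0,1} 1 = px 1 * (1 - \<beta>)"
    by (simp add: out_prob_def BEC_def)
  have o2: "out_prob px (BEC \<beta>) {0,1} 2 = \<beta>"
    using s by (simp add: out_prob_def BEC_def) (metis distrib_right mult_1)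
  have t0: "(if out_prob px (BEC \<beta>) {0,1} 0 > 0 then out_prob px (BEC \<beta>) {0,1} 0 *
        (\<Sum>x\<in>{0,1}. (px x * BEC \<beta> x 0 / out_prob px (BEC \<beta>) {0,1} 0) *
                  exp (w * (1 - px x * BEC \<beta> x 0 / out_prob px (BEC \<beta>) {0,1} 0))) else 0)
        = px 0 * (1 - \<beta>)"
    unfolding o0 using p0 assms(2) by (auto simp: BEC_def)
  have t1: "(if out_prob px (BEC \<beta>) {0,1} 1 > 0 then out_prob px (BEC \<beta>) {0,1} 1 *
        (\<Sum>x\<in>{0,1}. (px x * BEC \<beta> x 1 / out_prob px (BEC \<beta>) {0,1} 1) *
                  exp (w * (1 - px x * BEC \<beta> x 1 / out_prob px (BEC \<beta>) {0,1} 1))) else 0)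
        = px 1 * (1 - \<beta>)"
    unfolding o1 using p1 assms(2) by (auto simp: BEC_def)
  have t2: "(if out_prob px (BEC \<beta>) {0,1} 2 > 0 then out_prob px (BEC \<beta>) {0,1} 2 *
        (\<Sum>x\<in>{0,1}. (px x * BEC \<beta> x 2 / out_prob px (BEC \<beta>) {0,1} 2) *
                  exp (w * (1 - px x * BEC \<beta> x 2 / out_prob px (BEC \<beta>) {0,1} 2))) else 0)
        = \<beta> * ?f"
    unfolding o2 using assms(1) by (auto simp: BEC_def)
  have "CMIM w px (BEC \<beta>) {0,1} {0,1,2} = px 0 * (1 - \<beta>) + px 1 * (1 - \<beta>) + \<beta> * ?f"
    unfolding CMIM_def
    apply (subst sum.inter_filter)
     apply simp
    apply (subst sum3)
    unfolding t0 t1 t2 by simp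
  moreover have "MIM w px {0,1} = ?f" by (simp add: MIM_def)
  moreover have sb: "\<beta>*px 0 + \<beta>*px 1 = \<beta>" using s by (metis distrib_left mult_1_right)
  ultimately show ?thesis using s by (simp add: algebra_simps)
qed

lemma val_le:
  fixes w \<beta> :: real and px :: "nat \<Rightarrow> real"
  assumes "0 < w" "w < 2" "0 \<le> \<beta>" "\<beta> \<le> 1" "is_dist px {0,1}"
  shows "MIM w px {0,1} - CMIM w px (BEC \<beta>) {0,1} {0,1,2} \<le> (1 - \<beta>) * (exp (w / 2) - 1)"
proof -
  have p0: "px 0 \<ge> 0" and p1: "px 1 \<ge> 0" and s: "px 0 + px 1 = 1"
    using assms(5) unfolding is_dist_def by auto
  have q: "px 1 = 1 - px 0" using s by simp
  have "px 0 * exp (w * (1 - px 0)) + px 1 * exp (w * (1 - px 1)) \<le> exp (w/2)"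
    using key[OF assms(1,2) p0, of] p1 unfolding q by simp
  hence "(1 - \<beta>) * (px 0 * exp (w * (1 - px 0)) + px 1 * exp (w * (1 - px 1)) - 1)
     \<le> (1 - \<beta>) * (exp (w / 2) - 1)" using assms(4) by (intro mult_left_mono) auto
  thus ?thesis using chan[OF assms(3,4,5)] by simp
qed

theorem proposition2:
  fixes w \<beta> :: real
  assumes "0 < w" and "w < 2" and "0 \<le> \<beta>" and "\<beta> \<le> 1"
  shows "(\<forall>p\<in>{0..1}. MIM w (bin_dist p) {0,1} - CMIM w (bin_dist p) (BEC \<beta>) {0,1} {0,1,2}
              \<le> (1 - \<beta>) * (exp (w / 2) - 1))
       \<and> MIM w (bin_dist (1/2)) {0,1} - CMIM w (bin_dist (1/2)) (BEC \<beta>) {0,1} {0,1,2}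
              = (1 - \<beta>) * (exp (w / 2) - 1)
       \<and> MILC w (BEC \<beta>) {0,1} {0,1,2} = (1 - \<beta>) * (exp (w / 2) - 1)"
proof -
  have bd: "is_dist (bin_dist p) {0,1}" if "p \<in> {0..1}" for p
    using that by (simp add: is_dist_def bin_dist_def)
  have A: "\<forall>p\<in>{0..1}. MIM w (bin_dist p) {0,1} - CMIM w (bin_dist p) (BEC \<beta>) {0,1} {0,1,2}
              \<le> (1 - \<beta>) * (exp (w / 2) - 1)"
    using val_le[OF assms bd] by simp
  have B: "MIM w (bin_dist (1/2)) {0,1} - CMIM w (bin_dist (1/2)) (BEC \<beta>) {0,1} {0,1,2}
              = (1 - \<beta>) * (exp (w / 2) - 1)"
    using chan[OF assms(3,4) bd[of "1/2"]] by (simp add: bin_dist_def)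
  have C: "MILC w (BEC \<beta>) {0,1} {0,1,2} = (1 - \<beta>) * (exp (w / 2) - 1)"
    unfolding MILC_def
  proof (rule cSup_eq_maximum)
    show "(1 - \<beta>) * (exp (w / 2) - 1) \<in> {MIM w px {0,1} - CMIM w px (BEC \<beta>) {0,1} {0,1,2} |px. is_dist px {0,1}}"
      apply (rule CollectI, rule exI[of _ "bin_dist (1/2)"])
      using B bd[of "1/2"] by simp
    show "\<And>x. x\<in>{MIM w px {0,1} - CMIM w px (BEC \<beta>) {0,1} {0,1,2} |px. is_dist px {0,1}} \<Longrightarrow> x \<le> (1 - \<beta>) * (exp (w / 2) - 1)"
      using val_le[OF assms] by auto
  qed
  show ?thesis using A B C by blast
qed

end
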